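(* Let $q\in\mathbb{C}\setminus\{0\}$ with a fixed square root $q^{1/2}$, and let $D_x,D_y$ be invertible elements of an associative complex algebra satisfying $D_x^aD_y^b=q^{ab}D_y^bD_x^a$ for all $a,b\in\mathbb{Z}$. For $m=(m_1,m_2)\in\mathbb{Z}^2$ put $T_m=(q^{1/2})^{m_1m_2}D_y^{m_1}D_x^{m_2}$, and for $m,n\in\mathbb{Z}^2$ let $m\wedge n=m_1n_2-m_2n_1$. Define $[A,B]=AB-BA$ and, recursively for $n\ge3$, $$[A_1,\dots,A_n]=\sum_{s=1}^n(-1)^{s+1}A_s[A_1,\dots,\widehat{A_s},\dots,A_n].$$ Then for every $n\ge2$ and all $i_1,\dots,i_n\in\mathbb{Z}^2$, $$[T_{i_1},\dots,T_{i_n}]=\sum_{\sigma\in S_n}\mathrm{sgn}(\sigma)\,(q^{1/2})^{\sum_{1\le s<k\le n}i_{\sigma(k)}\wedge i_{\sigma(s)}}\;T_{i_1+\cdots+i_n}.$$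
   Context: The hat denotes omission of that entry. The elements $T_m$ satisfy $T_nT_m=(q^{1/2})^{m\wedge n}T_{n+m}$. *)

theory Defs
  imports Complex_Main "HOL-Combinatorics.Permutations"
begin

text \<open>A unital associative complex algebra is modelled as a ring with unit together
  with a unital ring homomorphism from the complex numbers into its centre
  (scalar multiplication c x is e c * x).\<close>
definition central_scalar_emb :: "(complex \<Rightarrow> 'a::ring_1) \<Rightarrow> bool" where
  "central_scalar_emb e \<longleftrightarrow> e 1 = 1 \<and> (\<forall>a b. e (a + b) = e a + e b)
     \<and> (\<forall>a b. e (a * b) = e a * e b) \<and> (\<forall>c x. e c * x = x * e c)"

definition zpow :: "'a::ring_1 \<Rightarrow> 'a \<Rightarrow> int \<Rightarrow> 'a" where
  "zpow D Dinv k = (if 0 \<le> k then D ^ nat k else Dinv ^ nat (- k))"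

definition wedge :: "int \<times> int \<Rightarrow> int \<times> int \<Rightarrow> int" where
  "wedge m n = fst m * snd n - snd m * fst n"

text \<open>The iterated bracket [A_1,...,A_n] (0-based indexing in the list).\<close>
function nbr :: "'a::ring_1 list \<Rightarrow> 'a" where
  "nbr xs = (if length xs < 2 then 0
     else if length xs = 2 then xs!0 * xs!1 - xs!1 * xs!0
     else (\<Sum>s<length xs. (-1) ^ s * (xs!s * nbr (take s xs @ drop (Suc s) xs))))"
  by pat_completeness auto
termination by (relation "measure length") auto

declare nbr.simps[simp del]

end

theory Submission imports Defs begin

definition alt :: "'a::ring_1 list \<Rightarrow> 'a" where
  "alt xs = (\<Sum>\<sigma> | \<sigma> permutes {..<length xs}. of_int (sign \<sigma>) * prod_list (map (\<lambda>k. xs!(\<sigma> k)) [0..<length xs]))"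

fun cyc :: "nat \<Rightarrow> nat \<Rightarrow> nat" where
  "cyc 0 = id" | "cyc (Suc s) = Transposition.transpose s (Suc s) \<circ> cyc s"

lemma cyc_permutes: "cyc s permutes {..s}"
proof (induction s)
  case 0 then show ?case by (simp only: cyc.simps permutes_id)
next
  case (Suc s)
  have "cyc s permutes {..Suc s}" using Suc permutes_subset by fastforce
  moreover have "Transposition.transpose s (Suc s) permutes {..Suc s}" by (rule permutes_swap_id) auto
  ultimately show ?case unfolding cyc.simps(2) by (rule permutes_compose)
qed

lemma sign_cyc: "sign (cyc s) = (-1)^s"
proof (induction s)
  case 0 then show ?case by simp
next
  case (Suc s)
  have "permutation (cyc s)" using cyc_permutes permutes_imp_permutation by blast
  then have "sign (Transposition.transpose s (Suc s) \<circ> cyc s) = sign (Transposition.transpose s (Suc s)) * sign (cyc s)"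
    by (intro sign_compose permutation_swap_id)
  then show ?case unfolding cyc.simps(2) sign_swap_id Suc.IH by (simp add: comp_def)
qed

lemma cyc_0: "cyc s 0 = s"
  by (induction s) (auto simp: Transposition.transpose_def)

lemma cyc_Suc: "cyc s (Suc j) = (if j < s then j else Suc j)"
  by (induction s) (auto simp: Transposition.transpose_def)

lemma alt_rec:
  fixes xs :: "'a::ring_1 list"
  assumes len: "length xs = Suc m"
  shows "alt xs = (\<Sum>s<Suc m. (-1)^s * (xs!s * alt (take s xs @ drop (Suc s) xs)))"
proof -
  define sh where "sh \<tau> = map_permutation {..<m} Suc \<tau>" for \<tau>
  define \<Phi> where "\<Phi> = (\<lambda>(s::nat,\<tau>). cyc s \<circ> sh \<tau>)"
  define P where "P = {\<tau>. \<tau> permutes {..<m}}"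
  define Q where "Q = {\<sigma>. \<sigma> permutes {..<Suc m}}"
  define A where "A = {..<Suc m}"
  have injS: "inj_on Suc {..<m}" by simp
  have sh_perm: "sh \<tau> permutes {..<Suc m}" if "\<tau> \<in> P" for \<tau>
  proof -
    have "bij_betw Suc {..<m} (Suc ` {..<m})" by (simp add: bij_betw_imageI)
    then have "sh \<tau> permutes Suc ` {..<m}"
      unfolding sh_def using that P_def by (simp add: map_permutation_permutes)
    then show ?thesis by (rule permutes_subset) auto
  qed
  have sh_Suc: "sh \<tau> (Suc k) = Suc (\<tau> k)" if "k < m" for \<tau> k
    unfolding sh_def using map_permutation_apply[OF injS] that by simp
  have sh_0: "sh \<tau> 0 = 0" if "\<tau> \<in> P" for \<tau>
  proof -
    have "sh \<tau> permutes Suc ` {..<m}"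
      unfolding sh_def using that P_def by (simp add: map_permutation_permutes bij_betw_imageI)
    then show ?thesis by (rule permutes_not_in) auto
  qed
  have sign_sh: "sign (sh \<tau>) = sign \<tau>" if "\<tau> \<in> P" for \<tau>
    unfolding sh_def using that P_def by (simp add: sign_map_permutation)
  have \<tau>_lt: "\<tau> k < m" if "\<tau> \<in> P" "k < m" for \<tau> k
    using that P_def permutes_in_image by fastforce
  have \<tau>_out: "\<tau> k = k" if "\<tau> \<in> P" "\<not> k < m" for \<tau> k
    using that P_def permutes_not_in by fastforce
  have Phi0: "\<Phi> (s,\<tau>) 0 = s" if "\<tau> \<in> P" for s \<tau>
    using that by (simp add: \<Phi>_def sh_0 cyc_0)
  have PhiS: "\<Phi> (s,\<tau>) (Suc k) = (if \<tau> k < s then \<tau> k else Suc (\<tau> k))" if "k < m" for s \<tau> k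
    using that by (simp add: \<Phi>_def sh_Suc cyc_Suc)
  have Phi_perm: "\<Phi> (s,\<tau>) permutes {..<Suc m}" if "s \<in> A" "\<tau> \<in> P" for s \<tau>
  proof -
    have "cyc s permutes {..<Suc m}"
      using that A_def by (intro permutes_subset[OF cyc_permutes]) auto
    then show ?thesis using sh_perm[OF that(2)] by (simp add: \<Phi>_def permutes_compose)
  qed
  have Phi_sign: "sign (\<Phi> (s,\<tau>)) = (-1)^s * sign \<tau>" if "\<tau> \<in> P" for s \<tau>
  proof -
    have "permutation (cyc s)" using cyc_permutes permutes_imp_permutation by blast
    moreover have "permutation (sh \<tau>)" using sh_perm[OF that] permutes_imp_permutation by blast
    ultimately show ?thesis by (simp add: \<Phi>_def sign_compose sign_cyc sign_sh that)
  qed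
  have inj: "inj_on \<Phi> (A \<times> P)"
  proof (rule inj_onI, clarify)
    fix s \<tau> s' \<tau>'
    assume as: "s \<in> A" "\<tau> \<in> P" "s' \<in> A" "\<tau>' \<in> P" and eq: "\<Phi> (s,\<tau>) = \<Phi> (s',\<tau>')"
    have ss: "s = s'" using Phi0[OF as(2), of s] Phi0[OF as(4), of s'] eq by metis
    show "s = s' \<and> \<tau> = \<tau>'"
    proof
      show "\<tau> = \<tau>'"
      proof
        fix k show "\<tau> k = \<tau>' k"
        proof (cases "k < m")
          case True
          have "\<Phi> (s,\<tau>) (Suc k) = \<Phi> (s,\<tau>') (Suc k)" using eq ss by simp
          then show ?thesis using PhiS[OF True] by (auto split: if_splits)
        next
          case False then show ?thesis using \<tau>_out[OF as(2) False] \<tau>_out[OF as(4) False] by simp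
        qed
      qed
    qed (rule ss)
  qed
  have bij: "bij_betw \<Phi> (A \<times> P) Q"
  proof -
    have sub: "\<Phi> ` (A \<times> P) \<subseteq> Q" using Phi_perm Q_def by auto
    have fQ: "finite Q" unfolding Q_def by (simp add: finite_permutations)
    have "card (\<Phi> ` (A \<times> P)) = card (A \<times> P)" using inj by (simp add: card_image)
    also have "\<dots> = Suc m * fact m" unfolding A_def P_def by (simp add: card_cartesian_product card_permutations)
    also have "\<dots> = card Q" unfolding Q_def by (simp add: card_permutations)
    finally have "\<Phi> ` (A \<times> P) = Q" using card_subset_eq[OF fQ sub] by simp
    then show ?thesis using inj by (simp add: bij_betw_def)
  qed
  define f where "f \<sigma> = (of_int (sign \<sigma>) :: 'a) * prod_list (map (\<lambda>k. xs!(\<sigma> k)) [0..<Suc m])" for \<sigma>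
  have "alt xs = sum f Q" unfolding alt_def f_def Q_def len ..
  also have "\<dots> = sum (f \<circ> \<Phi>) (A \<times> P)" using sum.reindex_bij_betw[OF bij, of f] by (simp add: comp_def)
  also have "\<dots> = (\<Sum>s\<in>A. \<Sum>\<tau>\<in>P. (-1)^s * (xs!s * (of_int (sign \<tau>) *
        prod_list (map (\<lambda>k. (take s xs @ drop (Suc s) xs)!(\<tau> k)) [0..<m]))))"
    unfolding sum.cartesian_product
  proof (rule sum.cong, simp, clarify)
    fix s \<tau> assume s: "s \<in> A" and t: "\<tau> \<in> P"
    let ?ys = "take s xs @ drop (Suc s) xs"
    have ys: "?ys ! j = xs ! (if j < s then j else Suc j)" if "j < m" for j
      using that s len A_def by (auto simp: nth_append min_def)
    have "map (\<lambda>k. xs!(\<Phi> (s,\<tau>) k)) [0..<Suc m]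
        = xs!s # map (\<lambda>k. ?ys!(\<tau> k)) [0..<m]"
      by (simp add: upt_conv_Cons map_Suc_upt[symmetric] Phi0[OF t] PhiS ys \<tau>_lt[OF t] del: upt_Suc)
    then show "(f \<circ> \<Phi>) (s, \<tau>) = (-1)^s * (xs!s * (of_int (sign \<tau>) *
        prod_list (map (\<lambda>k. ?ys!(\<tau> k)) [0..<m])))"
      by (simp add: f_def Phi_sign[OF t] mult.assoc mult_of_int_commute)
  qed
  also have "\<dots> = (\<Sum>s<Suc m. (-1)^s * (xs!s * alt (take s xs @ drop (Suc s) xs)))"
    unfolding A_def
  proof (rule sum.cong, simp)
    fix s assume "s \<in> {..<Suc m}"
    then have l: "length (take s xs @ drop (Suc s) xs) = m" using len by auto
    show "(\<Sum>\<tau>\<in>P. (-1)^s * (xs!s * (of_int (sign \<tau>) *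
        prod_list (map (\<lambda>k. (take s xs @ drop (Suc s) xs)!(\<tau> k)) [0..<m]))))
        = (-1)^s * (xs!s * alt (take s xs @ drop (Suc s) xs))"
      unfolding alt_def l P_def by (simp add: sum_distrib_left)
  qed
  finally show ?thesis .
qed


lemma alt_single: "alt [y] = y"
proof -
  have "{\<sigma>. \<sigma> permutes {..<Suc 0}} = {id}" by (auto simp: lessThan_Suc)
  then show ?thesis by (simp add: alt_def)
qed

lemma nbr_alt: "length xs \<ge> 2 \<Longrightarrow> nbr xs = alt xs"
proof (induction "length xs" arbitrary: xs rule: less_induct)
  case less
  obtain m where len: "length xs = Suc m" and m1: "m \<ge> 1" using less.prems
    by (cases "length xs") auto
  show ?case
  proof (cases "m = 1")
    case True
    then obtain a b where xs: "xs = [a,b]" using len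
      by (cases xs; cases "tl xs"; auto)
    show ?thesis unfolding alt_rec[OF len] using True
      by (simp add: xs nbr.simps alt_single numeral_2_eq_2)
  next
    case False
    have "nbr xs = (\<Sum>s<Suc m. (-1)^s * (xs!s * nbr (take s xs @ drop (Suc s) xs)))"
      using len False m1 by (subst nbr.simps) simp
    also have "\<dots> = alt xs" unfolding alt_rec[OF len]
    proof (rule sum.cong, simp)
      fix s assume "s \<in> {..<Suc m}"
      then have l: "length (take s xs @ drop (Suc s) xs) = m" using len by auto
      show "(-1)^s * (xs!s * nbr (take s xs @ drop (Suc s) xs)) = (-1)^s * (xs!s * alt (take s xs @ drop (Suc s) xs))"
        using less.hyps[of "take s xs @ drop (Suc s) xs"] l len False m1 by simp
    qed
    finally show ?thesis .
  qed
qed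



lemma pow_cancel:
  fixes D Di :: "'a::ring_1"
  assumes "D * Di = 1"
  shows "D ^ a * Di ^ c = (if c \<le> a then D ^ (a - c) else Di ^ (c - a))"
proof (induction c arbitrary: a)
  case 0 then show ?case by simp
next
  case (Suc c)
  have "D ^ a * Di ^ Suc c = (D ^ a * Di ^ c) * Di" by (simp only: power_Suc2 mult.assoc)
  also have "\<dots> = (if c \<le> a then D ^ (a - c) else Di ^ (c - a)) * Di" using Suc by simp
  also have "\<dots> = (if Suc c \<le> a then D ^ (a - Suc c) else Di ^ (Suc c - a))"
  proof (cases "Suc c \<le> a")
    case True
    then have "a - c = Suc (a - Suc c)" by simp
    then have "D ^ (a - c) * Di = D ^ (a - Suc c) * (D * Di)" by (simp only: power_Suc2 mult.assoc)
    then show ?thesis using True assms by simp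
  next
    case False
    then have "Suc c - a = Suc (c - a)" by simp
    then show ?thesis using False by (auto simp: power_Suc2 le_Suc_eq power_commutes)
  qed
  finally show ?case .
qed

lemma zpow_add:
  fixes D Di :: "'a::ring_1"
  assumes i1: "D * Di = 1" and i2: "Di * D = 1"
  shows "zpow D Di a * zpow D Di b = zpow D Di (a + b)"
proof -
  consider "0 \<le> a" "0 \<le> b" | "0 \<le> a" "b < 0" | "a < 0" "0 \<le> b" | "a < 0" "b < 0" by linarith
  then show ?thesis
  proof cases
    case 1 then show ?thesis by (simp add: zpow_def power_add[symmetric] nat_add_distrib)
  next
    case 2 then show ?thesis
      by (auto simp: zpow_def pow_cancel[OF i1] nat_diff_distrib' intro: arg_cong[where f="power _"])
  next
    case 3 then show ?thesis
      by (auto simp: zpow_def pow_cancel[OF i2] nat_diff_distrib' intro: arg_cong[where f="power _"])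
  next
    case 4
    then have "nat (- a - b) = nat (-a) + nat (-b)" by simp
    with 4 show ?thesis by (simp add: zpow_def power_add[symmetric])
  qed
qed



lemma e_facts:
  fixes e :: "complex \<Rightarrow> 'a::ring_1"
  assumes "central_scalar_emb e"
  shows e1: "e 1 = 1" and e_add: "e (a + b) = e a + e b" and e_mult: "e (a * b) = e a * e b"
    and e_central: "e c * x = x * e c"
  using assms[unfolded central_scalar_emb_def] by blast+

lemma e_of_int:
  fixes e :: "complex \<Rightarrow> 'a::ring_1"
  assumes al: "central_scalar_emb e"
  shows "e (of_int k) = of_int k"
proof -
  have e0: "e 0 = 0" using e_add[OF al, of 0 0] by simp
  have eneg: "e (- x) = - e x" for x
  proof -
    have "e x + e (-x) = 0" using e_add[OF al, of x "-x"] e0 by simp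
    then show ?thesis by (metis neg_eq_iff_add_eq_0)
  qed
  have enat: "e (of_nat n) = of_nat n" for n
    by (induction n) (simp_all add: e0 e_add[OF al] e1[OF al])
  show ?thesis
  proof (cases "k \<ge> 0")
    case True then show ?thesis using enat[of "nat k"] by simp
  next
    case False then show ?thesis using enat[of "nat (-k)"] eneg[of "of_nat (nat (-k))"] by simp
  qed
qed

lemma central_move:
  assumes "\<And>x. c * x = x * (c::'a::ring_1)"
  shows "(a * A) * (c * B) = a * c * (A * B)"
proof -
  have "A * (c * B) = (A * c) * B" by (simp add: mult.assoc)
  also have "\<dots> = (c * A) * B" by (simp only: assms[of A])
  finally show ?thesis by (simp add: mult.assoc)
qed

lemma wedge_sum: "(\<Sum>s<n. wedge x (a s)) = wedge x (\<Sum>s<n. fst (a s), \<Sum>s<n. snd (a s))"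
  by (simp add: wedge_def sum_distrib_left sum_subtractf)



theorem theorem5:
  fixes e :: "complex \<Rightarrow> 'a::ring_1"
    and q h :: complex
    and Dx Dxi Dy Dyi :: 'a
    and T :: "int \<times> int \<Rightarrow> 'a"
    and n :: nat
    and i :: "nat \<Rightarrow> int \<times> int"
  assumes alg: "central_scalar_emb e"
    and q_nz: "q \<noteq> 0"
    and sqrt_q: "h ^ 2 = q"
    and Dx_inv: "Dx * Dxi = 1" "Dxi * Dx = 1"
    and Dy_inv: "Dy * Dyi = 1" "Dyi * Dy = 1"
    and comm: "\<And>a b::int. zpow Dx Dxi a * zpow Dy Dyi b
                 = e (q powi (a * b)) * (zpow Dy Dyi b * zpow Dx Dxi a)"
    and T_def: "\<And>m. T m = e (h powi (fst m * snd m)) * (zpow Dy Dyi (fst m) * zpow Dx Dxi (snd m))"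
    and n2: "n \<ge> 2"
  shows "nbr (map (\<lambda>k. T (i k)) [0..<n])
       = (\<Sum>\<sigma> | \<sigma> permutes {..<n}.
            e (of_int (sign \<sigma>) * h powi (\<Sum>k<n. \<Sum>s<k. wedge (i (\<sigma> k)) (i (\<sigma> s))))
            * T (\<Sum>k<n. fst (i k), \<Sum>k<n. snd (i k)))"
proof -
  have hnz: "h \<noteq> 0" using q_nz sqrt_q by auto
  define Y where "Y a = zpow Dy Dyi a" for a
  define X where "X a = zpow Dx Dxi a" for a
  have eC: "e c * x = x * e c" for c x using e_central[OF alg] .
  have eM: "e (a * b) = e a * e b" for a b using e_mult[OF alg] .
  have TT: "T m * T p = e (h powi wedge p m) * T (fst m + fst p, snd m + snd p)" for m p
  proof -
    obtain m1 m2 where m: "m = (m1, m2)" by fastforce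
    obtain p1 p2 where p: "p = (p1, p2)" by fastforce
    let ?\<gamma> = "q powi (m2 * p1)"
    have "T m * T p = e (h powi (m1*m2)) * e (h powi (p1*p2)) * ((Y m1 * X m2) * (Y p1 * X p2))"
      unfolding T_def m p X_def Y_def by (simp add: central_move[OF eC])
    also have "(Y m1 * X m2) * (Y p1 * X p2) = Y m1 * (X m2 * Y p1) * X p2" by (simp add: mult.assoc)
    also have "X m2 * Y p1 = e ?\<gamma> * (Y p1 * X m2)" unfolding X_def Y_def by (rule comm)
    also have "Y m1 * (e ?\<gamma> * (Y p1 * X m2)) * X p2 = e ?\<gamma> * (Y (m1+p1) * X (m2+p2))"
    proof -
      have "Y m1 * (e ?\<gamma> * (Y p1 * X m2)) * X p2 = e ?\<gamma> * ((Y m1 * Y p1) * (X m2 * X p2))"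
      proof -
        have "Y m1 * (e ?\<gamma> * W) = e ?\<gamma> * (Y m1 * W)" for W
          by (simp only: mult.assoc[symmetric] eC[of ?\<gamma> "Y m1"])
        then show ?thesis by (simp add: mult.assoc)
      qed
      then show ?thesis unfolding X_def Y_def by (simp add: zpow_add Dx_inv Dy_inv)
    qed
    also have "e (h powi (m1*m2)) * e (h powi (p1*p2)) * (e ?\<gamma> * (Y (m1+p1) * X (m2+p2)))
        = e (h powi (m1*m2) * h powi (p1*p2) * ?\<gamma>) * (Y (m1+p1) * X (m2+p2))"
      by (simp add: eM mult.assoc)
    also have "h powi (m1*m2) * h powi (p1*p2) * ?\<gamma> = h powi (wedge p m) * h powi ((m1+p1)*(m2+p2))"
    proof -
      have "?\<gamma> = h powi (2 * (m2 * p1))" using sqrt_q by (metis power_int_power of_nat_numeral)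
      then have "h powi (m1*m2) * h powi (p1*p2) * ?\<gamma> = h powi (m1*m2 + p1*p2 + 2*(m2*p1))"
        by (simp add: power_int_add hnz)
      also have "m1*m2 + p1*p2 + 2*(m2*p1) = wedge p m + (m1+p1)*(m2+p2)"
        by (simp add: wedge_def p m algebra_simps)
      also have "h powi \<dots> = h powi (wedge p m) * h powi ((m1+p1)*(m2+p2))"
        by (simp add: power_int_add hnz)
      finally show ?thesis .
    qed
    finally show ?thesis unfolding T_def X_def Y_def by (simp add: m p eM mult.assoc)
  qed
  have prodT: "prod_list (map (\<lambda>k. T (a k)) [0..<N]) =
      e (h powi (\<Sum>k<N. \<Sum>s<k. wedge (a k) (a s))) * T (\<Sum>k<N. fst (a k), \<Sum>k<N. snd (a k))" for a N
  proof (induction N)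
    case 0
    have "T (0,0) = 1" unfolding T_def by (simp add: zpow_def e1[OF alg])
    then show ?case by (simp add: e1[OF alg])
  next
    case (Suc N)
    let ?S = "(\<Sum>k<N. fst (a k), \<Sum>k<N. snd (a k))"
    let ?W = "\<Sum>k<N. \<Sum>s<k. wedge (a k) (a s)"
    have "prod_list (map (\<lambda>k. T (a k)) [0..<Suc N]) = e (h powi ?W) * (T ?S * T (a N))"
      using Suc by (simp add: mult.assoc)
    also have "T ?S * T (a N) = e (h powi wedge (a N) ?S) * T (fst ?S + fst (a N), snd ?S + snd (a N))"
      by (rule TT)
    also have "e (h powi ?W) * (e (h powi wedge (a N) ?S) * T (fst ?S + fst (a N), snd ?S + snd (a N)))
      = e (h powi (?W + wedge (a N) ?S)) * T (fst ?S + fst (a N), snd ?S + snd (a N))"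
      by (simp add: power_int_add hnz eM mult.assoc)
    also have "?W + wedge (a N) ?S = (\<Sum>k<Suc N. \<Sum>s<k. wedge (a k) (a s))"
      by (simp add: wedge_sum)
    finally show ?case by simp
  qed
  let ?xs = "map (\<lambda>k. T (i k)) [0..<n]"
  have "nbr ?xs = alt ?xs" using n2 by (intro nbr_alt) simp
  also have "\<dots> = (\<Sum>\<sigma> | \<sigma> permutes {..<n}. of_int (sign \<sigma>) * prod_list (map (\<lambda>k. T (i (\<sigma> k))) [0..<n]))"
    unfolding alt_def
  proof (rule sum.cong)
    fix \<sigma> assume "\<sigma> \<in> {\<sigma>. \<sigma> permutes {..<n}}"
    then have "\<sigma> permutes {..<n}" by simp
    then have "\<sigma> k < n" if "k < n" for k using that permutes_in_image by fastforce
    then have "map (\<lambda>k. ?xs!(\<sigma> k)) [0..<n] = map (\<lambda>k. T (i (\<sigma> k))) [0..<n]"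
      by (intro map_cong) auto
    moreover have "length ?xs = n" by simp
    ultimately show "of_int (sign \<sigma>) * prod_list (map (\<lambda>k. ?xs!(\<sigma> k)) [0..<length ?xs]) =
       of_int (sign \<sigma>) * prod_list (map (\<lambda>k. T (i (\<sigma> k))) [0..<n])"
      by (simp only:)
  qed simp
  also have "\<dots> = (\<Sum>\<sigma> | \<sigma> permutes {..<n}.
            e (of_int (sign \<sigma>) * h powi (\<Sum>k<n. \<Sum>s<k. wedge (i (\<sigma> k)) (i (\<sigma> s))))
            * T (\<Sum>k<n. fst (i k), \<Sum>k<n. snd (i k)))"
  proof (rule sum.cong)
    fix \<sigma> assume "\<sigma> \<in> {\<sigma>. \<sigma> permutes {..<n}}"
    then have sp: "\<sigma> permutes {..<n}" by simp
    have s1: "(\<Sum>k<n. fst (i (\<sigma> k))) = (\<Sum>k<n. fst (i k))"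
      using sum.permute[OF sp, of "\<lambda>k. fst (i k)"] by (simp add: comp_def)
    have s2: "(\<Sum>k<n. snd (i (\<sigma> k))) = (\<Sum>k<n. snd (i k))"
      using sum.permute[OF sp, of "\<lambda>k. snd (i k)"] by (simp add: comp_def)
    show "of_int (sign \<sigma>) * prod_list (map (\<lambda>k. T (i (\<sigma> k))) [0..<n]) =
       e (of_int (sign \<sigma>) * h powi (\<Sum>k<n. \<Sum>s<k. wedge (i (\<sigma> k)) (i (\<sigma> s))))
            * T (\<Sum>k<n. fst (i k), \<Sum>k<n. snd (i k))"
      using prodT[of "\<lambda>k. i (\<sigma> k)" n] s1 s2 by (simp add: eM e_of_int[OF alg] mult.assoc)
  qed simp
  finally show ?thesis .
qed


end
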